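(* Let $\mathbb X$ be a deterministic $n\times p$ design matrix. Observe $\mathbf y=\mathbf f+\boldsymbol\xi$ where the random vector $\boldsymbol\xi\in\mathbf R^n$ satisfies $\mathbb E\exp(\alpha^T\boldsymbol\xi)\le\exp(\|\alpha\|_2^2K^2/2)$ for all $\alpha\in\mathbf R^n$, and let $K>0$ be the smallest positive number with this property. Let $\hat K$ be a given estimator and $\delta:=\mathbb P(\hat K^2<K^2)$. Then for all $x>0$, with probability at least $1-\delta-3e^{-x}$, the estimator $\hat{\boldsymbol\mu}_{\textsc{spa}}$ satisfies \[\|\hat{\boldsymbol\mu}_{\textsc{spa}}-\mathbf f\|_2^2\le\inf_{\boldsymbol\theta\in\mathbf R^p}\Big[\|\mathbb X\boldsymbol\theta-\mathbf f\|_2^2+31K^2x+(64\hat K^2+4K^2)\Big(\tfrac12+2\|\boldsymbol\theta\|_0\log\Big(\tfrac{ep}{1\vee\|\boldsymbol\theta\|_0}\Big)\Big)\Big].\]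
   Context: $\|\boldsymbol\theta\|_0$ is the number of nonzero coordinates. For each $J\subseteq\{1,\dots,p\}$, $A_J$ is the orthogonal projection matrix onto the span of the columns of $\mathbb X$ with indices in $J$ (so $A_J\mathbf y$ is the least squares estimator on that span). Weights: $\pi_J\propto e^{-|J|}\binom{p}{|J|}^{-1}$ normalized so that $\sum_J\pi_J=1$. Let $\Lambda=\{\boldsymbol\lambda=(\lambda_J)_{J\subseteq\{1,\dots,p\}}:\sum_J\lambda_J=1,\lambda_J\ge0\}$ and for $\boldsymbol\lambda\in\Lambda$, $\hat{\boldsymbol\mu}_{\boldsymbol\lambda}=\sum_J\lambda_JA_J\mathbf y$. Then $\hat{\boldsymbol\mu}_{\textsc{spa}}=\hat{\boldsymbol\mu}_{\hat{\boldsymbol\lambda}}$ where $\hat{\boldsymbol\lambda}$ minimizes over $\Lambda$ the function $\|\mathbf y-\hat{\boldsymbol\mu}_{\boldsymbol\lambda}\|_2^2+\sum_J\lambda_J\big(\frac12\|A_J\mathbf y-\hat{\boldsymbol\mu}_{\boldsymbol\lambda}\|_2^2+32\hat K^2\log\frac1{\pi_J}\big)$. *)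

theory Defs
  imports "HOL-Analysis.Analysis" "HOL-Probability.Probability"
begin

text \<open>Design matrix X :: real^'p^'n (n rows, p columns); J ranges over subsets of the
column index type 'p (which plays the role of {1..p}, p = CARD('p)).\<close>

definition proj_cols :: "real^'p^'n \<Rightarrow> 'p set \<Rightarrow> real^'n \<Rightarrow> real^'n" where
  "proj_cols X J y = closest_point (span ((\<lambda>j. column j X) ` J)) y"

definition l0norm :: "real^'p \<Rightarrow> nat" where
  "l0norm \<theta> = card {j. \<theta> $ j \<noteq> 0}"

definition prior_w :: "'p::finite set \<Rightarrow> real" where
  "prior_w J = exp (- real (card J)) / real (CARD('p) choose card J)"

definition prior :: "'p::finite set \<Rightarrow> real" where
  "prior J = prior_w J / (\<Sum>J'\<in>(UNIV :: 'p set set). prior_w J')"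

definition simplex_weights :: "('p::finite set \<Rightarrow> real) set" where
  "simplex_weights = {lam. (\<forall>J. lam J \<ge> 0) \<and> (\<Sum>J\<in>UNIV. lam J) = 1}"

definition mu_lam :: "real^'p::finite^'n \<Rightarrow> ('p set \<Rightarrow> real) \<Rightarrow> real^'n \<Rightarrow> real^'n" where
  "mu_lam X lam y = (\<Sum>J\<in>UNIV. lam J *\<^sub>R proj_cols X J y)"

definition spa_crit :: "real^'p::finite^'n \<Rightarrow> real \<Rightarrow> real^'n \<Rightarrow> ('p set \<Rightarrow> real) \<Rightarrow> real" where
  "spa_crit X Khat y lam =
     (norm (y - mu_lam X lam y))\<^sup>2
     + (\<Sum>J\<in>UNIV. lam J * ((1/2) * (norm (proj_cols X J y - mu_lam X lam y))\<^sup>2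
                              + 32 * Khat\<^sup>2 * ln (1 / prior J)))"

definition is_spa_weight :: "real^'p::finite^'n \<Rightarrow> real \<Rightarrow> real^'n \<Rightarrow> ('p set \<Rightarrow> real) \<Rightarrow> bool" where
  "is_spa_weight X Khat y lam \<longleftrightarrow> lam \<in> simplex_weights \<and>
     (\<forall>lam' \<in> simplex_weights. spa_crit X Khat y lam \<le> spa_crit X Khat y lam')"

definition subgauss_cond :: "'a measure \<Rightarrow> ('a \<Rightarrow> real^'n) \<Rightarrow> real \<Rightarrow> bool" where
  "subgauss_cond M \<xi> K \<longleftrightarrow> (\<forall>\<alpha>::real^'n.
      integrable M (\<lambda>\<omega>. exp (\<alpha> \<bullet> \<xi> \<omega>)) \<and>
      (\<integral>\<omega>. exp (\<alpha> \<bullet> \<xi> \<omega>) \<partial>M) \<le> exp ((norm \<alpha>)\<^sup>2 * K\<^sup>2 / 2))"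

end

theory Submission
  imports Defs
begin


abbreviation "NN \<equiv> density lborel (\<lambda>x. ennreal (std_normal_density x))"

lemma NN_prob: "prob_space NN"
  using prob_space_normal_density[where \<sigma>=1 and \<mu>=0] by simp

lemma nn_int_normal: "\<sigma> > 0 \<Longrightarrow> (\<integral>\<^sup>+x. ennreal (normal_density \<mu> \<sigma> x) \<partial>lborel) = 1"
  by (subst nn_integral_eq_integral) (auto simp: normal_density_nonneg)

lemma gauss_mgf: "(\<integral>\<^sup>+x. ennreal (exp (c * x)) \<partial>NN) = ennreal (exp (c\<^sup>2 / 2))"
proof -
  have eq: "std_normal_density x * exp (c * x) = exp (c\<^sup>2/2) * normal_density c 1 x" for x
  proof -
    have "exp (- x\<^sup>2 / 2) * exp (c * x) = exp (c\<^sup>2/2) * exp (- (x - c)\<^sup>2 / 2)"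
      by (simp add: exp_add[symmetric] power2_eq_square field_simps)
    then show ?thesis unfolding normal_density_def by (simp add: std_normal_density_def[unfolded normal_density_def])
  qed
  have "(\<integral>\<^sup>+x. ennreal (exp (c * x)) \<partial>NN) = (\<integral>\<^sup>+x. ennreal (std_normal_density x) * ennreal (exp (c * x)) \<partial>lborel)"
    by (subst nn_integral_density) auto
  also have "\<dots> = (\<integral>\<^sup>+x. ennreal (exp (c\<^sup>2/2)) * ennreal (normal_density c 1 x) \<partial>lborel)"
    by (intro nn_integral_cong) (simp add: ennreal_mult'[symmetric] eq)
  also have "\<dots> = ennreal (exp (c\<^sup>2/2)) * (\<integral>\<^sup>+x. ennreal (normal_density c 1 x) \<partial>lborel)"
    by (subst nn_integral_cmult) auto
  also have "\<dots> = ennreal (exp (c\<^sup>2/2))" by (simp add: nn_int_normal)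
  finally show ?thesis .
qed

lemma gauss_sq: "(\<integral>\<^sup>+x. ennreal (exp (x\<^sup>2 / 4)) \<partial>NN) = ennreal (sqrt 2)"
proof -
  have eq: "std_normal_density x * exp (x\<^sup>2/4) = sqrt 2 * normal_density 0 (sqrt 2) x" for x
  proof -
    have "exp (- x\<^sup>2 / 2) * exp (x\<^sup>2/4) = exp (- x\<^sup>2 / 4)"
      by (simp add: exp_add[symmetric])
    moreover have "sqrt (2 * pi * 2) = sqrt 2 * sqrt (2 * pi)" by (simp add: real_sqrt_mult[symmetric] ac_simps)
    ultimately show ?thesis unfolding normal_density_def std_normal_density_def
      by (simp add: field_simps)
  qed
  have "(\<integral>\<^sup>+x. ennreal (exp (x\<^sup>2/4)) \<partial>NN) = (\<integral>\<^sup>+x. ennreal (std_normal_density x) * ennreal (exp (x\<^sup>2/4)) \<partial>lborel)"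
    by (subst nn_integral_density) auto
  also have "\<dots> = (\<integral>\<^sup>+x. ennreal (sqrt 2) * ennreal (normal_density 0 (sqrt 2) x) \<partial>lborel)"
    by (intro nn_integral_cong) (simp add: ennreal_mult'[symmetric] eq)
  also have "\<dots> = ennreal (sqrt 2) * (\<integral>\<^sup>+x. ennreal (normal_density 0 (sqrt 2) x) \<partial>lborel)"
    by (subst nn_integral_cmult) auto
  also have "\<dots> = ennreal (sqrt 2)" by (simp add: nn_int_normal)
  finally show ?thesis .
qed



lemma orthonormal_inner:
  assumes "pairwise orthogonal B" "\<forall>u\<in>B. norm u = 1" "u \<in> B" "v \<in> B"
  shows "u \<bullet> v = (if u = v then 1 else 0)"
  using assms by (auto simp: pairwise_def orthogonal_def norm_eq_1)

lemma norm_sum_onb: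
  fixes B :: "'a::real_inner set"
  assumes "finite B" "pairwise orthogonal B" "\<forall>u\<in>B. norm u = 1"
  shows "(\<Sum>u\<in>B. a u *\<^sub>R u) \<bullet> (\<Sum>u\<in>B. a u *\<^sub>R u) = (\<Sum>u\<in>B. (a u)\<^sup>2)"
proof -
  have "(\<Sum>u\<in>B. a u *\<^sub>R u) \<bullet> (\<Sum>u\<in>B. a u *\<^sub>R u) = (\<Sum>u\<in>B. \<Sum>v\<in>B. a u * (a v * (v \<bullet> u)))"
    by (simp add: inner_sum_left inner_sum_right sum_distrib_left)
  also have "\<dots> = (\<Sum>u\<in>B. \<Sum>v\<in>B. if u = v then a u * a u else 0)"
    using assms by (intro sum.cong refl) (auto simp: orthonormal_inner)
  also have "\<dots> = (\<Sum>u\<in>B. (a u)\<^sup>2)"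
    using assms(1) by (simp add: sum.delta power2_eq_square)
  finally show ?thesis .
qed

lemma mgf_quad:
  fixes M :: "'a measure" and \<xi> :: "'a \<Rightarrow> real^'n" and B :: "(real^'n) set"
  assumes M: "prob_space M" and meas[measurable]: "\<xi> \<in> borel_measurable M"
    and sg: "subgauss_cond M \<xi> K" and K: "K > 0"
    and B: "finite B" "pairwise orthogonal B" "\<forall>u\<in>B. norm u = 1"
  shows "(\<integral>\<^sup>+\<omega>. ennreal (exp ((\<Sum>u\<in>B. (\<xi> \<omega> \<bullet> u)\<^sup>2) / (4 * K\<^sup>2))) \<partial>M) \<le> ennreal (sqrt 2 ^ card B)"
proof -
  define c where "c = 1 / (sqrt 2 * K)"
  have c2: "c\<^sup>2 = 1 / (2 * K\<^sup>2)" using K by (simp add: c_def power2_eq_square field_simps)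
  define G where "G = PiM B (\<lambda>_. NN)"
  interpret NNp: prob_space NN by (rule NN_prob)
  interpret P: product_prob_space "\<lambda>_. NN" B by unfold_locales
  interpret FP: finite_product_prob_space "\<lambda>_. NN" B by unfold_locales (use B in auto)
  interpret Mp: prob_space M by (rule M)
  interpret Gp: prob_space G unfolding G_def by (rule prob_space_PiM) (use NN_prob in auto)
  interpret PS: pair_sigma_finite M G by unfold_locales
  define F where "F = (\<lambda>\<omega> g. ennreal (exp (c * (\<Sum>u\<in>B. (\<xi> \<omega> \<bullet> u) * g u))))"
  have Fm: "case_prod F \<in> borel_measurable (M \<Otimes>\<^sub>M G)"
  proof -
    have m1: "(\<lambda>p. \<xi> (fst p) \<bullet> u * snd p u) \<in> borel_measurable (M \<Otimes>\<^sub>M G)" if "u \<in> B" for u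
    proof -
      have [measurable]: "(\<lambda>g. g u) \<in> borel_measurable G"
        unfolding G_def using that by (intro measurable_component_singleton[THEN measurable_compose]) auto
      show ?thesis by measurable
    qed
    have "(\<lambda>p. \<Sum>u\<in>B. \<xi> (fst p) \<bullet> u * snd p u) \<in> borel_measurable (M \<Otimes>\<^sub>M G)"
      by (intro borel_measurable_sum m1)
    then show ?thesis unfolding F_def split_beta' by measurable
  qed
  have step1: "ennreal (exp ((\<Sum>u\<in>B. (\<xi> \<omega> \<bullet> u)\<^sup>2) / (4 * K\<^sup>2))) = (\<integral>\<^sup>+g. F \<omega> g \<partial>G)" for \<omega>
  proof -
    have "(\<integral>\<^sup>+g. F \<omega> g \<partial>G) = (\<integral>\<^sup>+g. (\<Prod>u\<in>B. ennreal (exp (c * (\<xi> \<omega> \<bullet> u) * g u))) \<partial>G)"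
      unfolding F_def using B(1)
      by (intro nn_integral_cong) (simp add: exp_sum sum_distrib_left prod_ennreal mult.assoc)
    also have "\<dots> = (\<Prod>u\<in>B. (\<integral>\<^sup>+x. ennreal (exp (c * (\<xi> \<omega> \<bullet> u) * x)) \<partial>NN))"
      unfolding G_def by (rule P.product_nn_integral_prod) (use B in auto)
    also have "\<dots> = (\<Prod>u\<in>B. ennreal (exp ((c * (\<xi> \<omega> \<bullet> u))\<^sup>2 / 2)))"
      by (intro prod.cong refl) (simp add: gauss_mgf)
    also have "\<dots> = ennreal (exp ((\<Sum>u\<in>B. (\<xi> \<omega> \<bullet> u)\<^sup>2) / (4 * K\<^sup>2)))"
      using B(1) K by (simp add: prod_ennreal exp_sum[symmetric] sum_divide_distrib power_mult_distrib c2)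
    finally show ?thesis ..
  qed
  have step3: "(\<integral>\<^sup>+\<omega>. F \<omega> g \<partial>M) \<le> (\<Prod>u\<in>B. ennreal (exp ((g u)\<^sup>2 / 4)))" for g
  proof -
    define \<alpha> where "\<alpha> = (\<Sum>u\<in>B. (c * g u) *\<^sub>R u)"
    have "F \<omega> g = ennreal (exp (\<alpha> \<bullet> \<xi> \<omega>))" for \<omega>
    proof -
      have "\<alpha> \<bullet> \<xi> \<omega> = (\<Sum>u\<in>B. c * (g u * (u \<bullet> \<xi> \<omega>)))" by (simp add: \<alpha>_def inner_sum_left mult.assoc)
      also have "\<dots> = c * (\<Sum>u\<in>B. \<xi> \<omega> \<bullet> u * g u)"
        by (simp add: sum_distrib_left inner_commute mult.commute)
      finally show ?thesis unfolding F_def by simp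
    qed
    then have "(\<integral>\<^sup>+\<omega>. F \<omega> g \<partial>M) = (\<integral>\<^sup>+\<omega>. ennreal (exp (\<alpha> \<bullet> \<xi> \<omega>)) \<partial>M)" by simp
    also have "\<dots> = ennreal (\<integral>\<omega>. exp (\<alpha> \<bullet> \<xi> \<omega>) \<partial>M)"
      using sg unfolding subgauss_cond_def by (intro nn_integral_eq_integral) auto
    also have "\<dots> \<le> ennreal (exp ((norm \<alpha>)\<^sup>2 * K\<^sup>2 / 2))"
      using sg unfolding subgauss_cond_def by (intro ennreal_leI) auto
    also have "(norm \<alpha>)\<^sup>2 = c\<^sup>2 * (\<Sum>u\<in>B. (g u)\<^sup>2)"
      unfolding power2_norm_eq_inner \<alpha>_def using norm_sum_onb[OF B, of "\<lambda>u. c * g u"]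
      by (simp add: power_mult_distrib sum_distrib_left)
    also have "ennreal (exp (c\<^sup>2 * (\<Sum>u\<in>B. (g u)\<^sup>2) * K\<^sup>2 / 2)) = (\<Prod>u\<in>B. ennreal (exp ((g u)\<^sup>2 / 4)))"
    proof -
      have "c\<^sup>2 * (\<Sum>u\<in>B. (g u)\<^sup>2) * K\<^sup>2 / 2 = (\<Sum>u\<in>B. (g u)\<^sup>2) / 4"
        using K by (simp add: c2 field_simps)
      then show ?thesis using B(1) by (simp add: prod_ennreal exp_sum[symmetric] sum_divide_distrib)
    qed
    finally show ?thesis .
  qed
  have "(\<integral>\<^sup>+\<omega>. ennreal (exp ((\<Sum>u\<in>B. (\<xi> \<omega> \<bullet> u)\<^sup>2) / (4 * K\<^sup>2))) \<partial>M) = (\<integral>\<^sup>+\<omega>. (\<integral>\<^sup>+g. F \<omega> g \<partial>G) \<partial>M)"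
    by (simp add: step1)
  also have "\<dots> = (\<integral>\<^sup>+g. (\<integral>\<^sup>+\<omega>. F \<omega> g \<partial>M) \<partial>G)"
    by (rule PS.Fubini'[OF Fm, symmetric])
  also have "\<dots> \<le> (\<integral>\<^sup>+g. (\<Prod>u\<in>B. ennreal (exp ((g u)\<^sup>2 / 4))) \<partial>G)"
    by (intro nn_integral_mono step3)
  also have "\<dots> = (\<Prod>u\<in>B. (\<integral>\<^sup>+x. ennreal (exp (x\<^sup>2 / 4)) \<partial>NN))"
    unfolding G_def by (rule P.product_nn_integral_prod) (use B in auto)
  also have "\<dots> = ennreal (sqrt 2 ^ card B)"
    by (simp add: gauss_sq prod_ennreal ennreal_power)
  finally show ?thesis .
qed



lemma quad_tail:
  fixes M :: "'a measure" and \<xi> :: "'a \<Rightarrow> real^'n" and B :: "(real^'n) set"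
  assumes M: "prob_space M" and meas[measurable]: "\<xi> \<in> borel_measurable M"
    and sg: "subgauss_cond M \<xi> K" and K: "K > 0"
    and B: "finite B" "pairwise orthogonal B" "\<forall>u\<in>B. norm u = 1"
  shows "measure M {\<omega>\<in>space M. 4 * K\<^sup>2 * (card B * ln 2 / 2 + t) \<le> (\<Sum>u\<in>B. (\<xi> \<omega> \<bullet> u)\<^sup>2)} \<le> exp (- t)"
proof -
  interpret Mp: prob_space M by (rule M)
  define T where "T = 4 * K\<^sup>2 * (card B * ln 2 / 2 + t)"
  define Z where "Z = (\<lambda>\<omega>. (\<Sum>u\<in>B. (\<xi> \<omega> \<bullet> u)\<^sup>2))"
  define u where "u = (\<lambda>\<omega>. ennreal (exp (Z \<omega> / (4 * K\<^sup>2))))"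
  have um[measurable]: "u \<in> borel_measurable M" unfolding u_def Z_def by measurable
  have K2: "4 * K\<^sup>2 > 0" using K by simp
  have set_eq: "{\<omega>\<in>space M. T \<le> Z \<omega>} = {\<omega>\<in>space M. 1 \<le> ennreal (exp (- T / (4 * K\<^sup>2))) * u \<omega>}"
  proof -
    have "T \<le> Z \<omega> \<longleftrightarrow> 1 \<le> exp (- T / (4 * K\<^sup>2)) * exp (Z \<omega> / (4 * K\<^sup>2))" for \<omega>
    proof -
      have "1 \<le> exp (- T / (4 * K\<^sup>2)) * exp (Z \<omega> / (4 * K\<^sup>2)) \<longleftrightarrow> 0 \<le> (Z \<omega> - T) / (4 * K\<^sup>2)"
        by (simp add: exp_add[symmetric] diff_divide_distrib)
      also have "\<dots> \<longleftrightarrow> T \<le> Z \<omega>" using K2 by (simp add: zero_le_divide_iff)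
      finally show ?thesis by simp
    qed
    then show ?thesis unfolding u_def by (auto simp: ennreal_mult'[symmetric])
  qed
  have "emeasure M {\<omega>\<in>space M. T \<le> Z \<omega>} \<le> ennreal (exp (- T / (4 * K\<^sup>2))) * (\<integral>\<^sup>+x. u x * indicator (space M) x \<partial>M)"
    unfolding set_eq by (rule nn_integral_Markov_inequality) auto
  also have "(\<integral>\<^sup>+x. u x * indicator (space M) x \<partial>M) = (\<integral>\<^sup>+x. u x \<partial>M)"
    by (intro nn_integral_cong) auto
  also have "(\<integral>\<^sup>+x. u x \<partial>M) \<le> ennreal (sqrt 2 ^ card B)"
    unfolding u_def Z_def by (rule mgf_quad[OF assms])
  also have "ennreal (exp (- T / (4 * K\<^sup>2))) * ennreal (sqrt 2 ^ card B) = ennreal (exp (- t))"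
  proof -
    have s2: "sqrt 2 = exp (ln 2 / 2)"
      by (simp add: exp_divide_power_eq powr_half_sqrt[symmetric] powr_def)
    have "sqrt 2 ^ card B = exp (card B * ln 2 / 2)"
      unfolding s2 by (simp add: exp_of_nat_mult[symmetric])
    moreover have "- T / (4 * K\<^sup>2) + card B * ln 2 / 2 = - t"
      unfolding T_def using K2 by (simp add: field_simps)
    ultimately show ?thesis
      by (simp add: ennreal_mult'[symmetric] exp_add[symmetric])
  qed
  finally have "emeasure M {\<omega>\<in>space M. T \<le> Z \<omega>} \<le> ennreal (exp (- t))"
    by (simp add: mult_left_mono)
  then show ?thesis
    unfolding T_def Z_def by (simp add: Mp.emeasure_eq_measure)
qed



definition onbp :: "'a::euclidean_space set \<Rightarrow> 'a \<Rightarrow> 'a" where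
  "onbp B y = (\<Sum>u\<in>B. (y \<bullet> u) *\<^sub>R u)"

definition is_onb :: "'a::euclidean_space set \<Rightarrow> bool" where
  "is_onb B \<longleftrightarrow> finite B \<and> pairwise orthogonal B \<and> (\<forall>u\<in>B. norm u = 1)"

lemma onb_inner:
  assumes "is_onb B" "u \<in> B" "v \<in> B"
  shows "u \<bullet> v = (if u = v then 1 else 0)"
  using assms by (auto simp: is_onb_def pairwise_def orthogonal_def norm_eq_1)

lemma onb_expand:
  assumes "is_onb B" "w \<in> span B"
  shows "onbp B w = w"
  using orthonormal_basis_expand[of B w] assms by (auto simp: is_onb_def onbp_def)

lemma onb_inner_expand:
  assumes "is_onb B" "w \<in> span B"
  shows "v \<bullet> w = (\<Sum>u\<in>B. (v \<bullet> u) * (w \<bullet> u))"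
proof -
  have "v \<bullet> w = v \<bullet> onbp B w" using onb_expand[OF assms] by simp
  also have "\<dots> = (\<Sum>u\<in>B. (v \<bullet> u) * (w \<bullet> u))"
    by (simp add: onbp_def inner_sum_right mult.commute)
  finally show ?thesis .
qed

lemma onbp_in_span: "onbp B y \<in> span B"
  unfolding onbp_def by (intro span_sum span_scale span_base) 

lemma onbp_orth:
  assumes "is_onb B" "w \<in> span B"
  shows "(y - onbp B y) \<bullet> w = 0"
proof -
  have "onbp B y \<bullet> w = (\<Sum>u\<in>B. (y \<bullet> u) * (u \<bullet> w))"
    by (simp add: onbp_def inner_sum_left)
  also have "\<dots> = y \<bullet> w" using onb_inner_expand[OF assms, of y]
    by (simp add: inner_commute)
  finally show ?thesis by (simp add: inner_diff_left)
qed

lemma pyth: "(a::'a::real_inner) \<bullet> b = 0 \<Longrightarrow> (norm (a + b))\<^sup>2 = (norm a)\<^sup>2 + (norm b)\<^sup>2"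
  by (simp add: power2_norm_eq_inner inner_add_left inner_add_right inner_commute)

lemma onbp_closest:
  assumes "is_onb B"
  shows "closest_point (span B) y = onbp B y"
proof -
  have "dist y (onbp B y) \<le> dist y z" if "z \<in> span B" for z
  proof -
    have w: "onbp B y - z \<in> span B" using onbp_in_span that by (rule span_diff)
    have "(dist y z)\<^sup>2 = (norm ((y - onbp B y) + (onbp B y - z)))\<^sup>2" by (simp add: dist_norm)
    also have "\<dots> = (norm (y - onbp B y))\<^sup>2 + (norm (onbp B y - z))\<^sup>2"
      using onbp_orth[OF assms w, of y] by (rule pyth)
    finally have "(dist y (onbp B y))\<^sup>2 \<le> (dist y z)\<^sup>2" by (simp add: dist_norm)
    then show ?thesis by (simp add: power2_le_iff_abs_le)
  qed
  then show ?thesis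
    by (intro closest_point_unique[symmetric] subspace_imp_convex) (auto simp: onbp_in_span)
qed

lemma onb_key1:
  assumes "is_onb B" "w \<in> span B"
  shows "2 * (\<xi> \<bullet> w) - (1/2) * (w \<bullet> w) \<le> 2 * (\<Sum>u\<in>B. (\<xi> \<bullet> u)\<^sup>2)"
proof -
  have "2 * (\<xi> \<bullet> w) - (1/2) * (w \<bullet> w) = (\<Sum>u\<in>B. 2 * ((\<xi> \<bullet> u) * (w \<bullet> u)) - (1/2) * ((w \<bullet> u) * (w \<bullet> u)))"
    using onb_inner_expand[OF assms, of \<xi>] onb_inner_expand[OF assms, of w]
    by (simp add: sum_subtractf sum_distrib_left)
  also have "\<dots> \<le> (\<Sum>u\<in>B. 2 * (\<xi> \<bullet> u)\<^sup>2)"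
  proof (intro sum_mono)
    fix u
    have "0 \<le> (1/2) * (2 * (\<xi> \<bullet> u) - (w \<bullet> u))\<^sup>2" by simp
    then show "2 * ((\<xi> \<bullet> u) * (w \<bullet> u)) - (1/2) * ((w \<bullet> u) * (w \<bullet> u)) \<le> 2 * (\<xi> \<bullet> u)\<^sup>2"
      by (simp add: power2_eq_square algebra_simps)
  qed
  finally show ?thesis by (simp add: sum_distrib_left)
qed

lemma onb_key2:
  assumes "is_onb B" "z \<in> span B"
  shows "(norm (f - onbp B (f + \<xi>)))\<^sup>2 \<le> (norm (f - z))\<^sup>2 + (\<Sum>u\<in>B. (\<xi> \<bullet> u)\<^sup>2)"
proof -
  have lin: "onbp B (f + \<xi>) = onbp B f + onbp B \<xi>"
    by (simp add: onbp_def inner_add_left scaleR_add_left sum.distrib)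
  have o1: "(f - onbp B f) \<bullet> onbp B \<xi> = 0" by (rule onbp_orth[OF assms(1) onbp_in_span])
  have o2: "(f - onbp B f) \<bullet> (onbp B f - z) = 0"
    by (rule onbp_orth[OF assms(1)]) (intro span_diff onbp_in_span assms(2))
  have nx: "onbp B \<xi> \<bullet> onbp B \<xi> = (\<Sum>u\<in>B. (\<xi> \<bullet> u)\<^sup>2)"
  proof -
    have "onbp B \<xi> \<bullet> onbp B \<xi> = \<xi> \<bullet> onbp B \<xi>"
      using onbp_orth[OF assms(1) onbp_in_span[of B \<xi>], of \<xi>] by (simp add: inner_diff_left)
    also have "\<dots> = (\<Sum>u\<in>B. (\<xi> \<bullet> u) * (\<xi> \<bullet> u))"
      by (simp add: onbp_def inner_sum_right)
    finally show ?thesis by (simp add: power2_eq_square)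
  qed
  have "(norm (f - onbp B (f + \<xi>)))\<^sup>2 = (norm (f - onbp B f))\<^sup>2 + (\<Sum>u\<in>B. (\<xi> \<bullet> u)\<^sup>2)"
    unfolding lin power2_norm_eq_inner using o1 nx
    by (simp add: inner_diff_left inner_diff_right inner_add_right inner_commute)
  moreover have "(norm (f - z))\<^sup>2 = (norm (f - onbp B f))\<^sup>2 + (norm (onbp B f - z))\<^sup>2"
  proof -
    have "f - z = (f - onbp B f) + (onbp B f - z)" by simp
    then show ?thesis using pyth[OF o2] by simp
  qed
  ultimately show ?thesis by simp
qed



lemma crit_formula:
  fixes p :: "'i::finite \<Rightarrow> 'v::real_inner"
  assumes "(\<Sum>i\<in>UNIV. lam i) = 1"
  shows "(norm (y - (\<Sum>i\<in>UNIV. lam i *\<^sub>R p i)))\<^sup>2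
      + (\<Sum>i\<in>UNIV. lam i * ((1/2) * (norm (p i - (\<Sum>i\<in>UNIV. lam i *\<^sub>R p i)))\<^sup>2 + c i))
    = y \<bullet> y - 2 * (y \<bullet> (\<Sum>i\<in>UNIV. lam i *\<^sub>R p i)) + (1/2) * ((\<Sum>i\<in>UNIV. lam i *\<^sub>R p i) \<bullet> (\<Sum>i\<in>UNIV. lam i *\<^sub>R p i))
      + (1/2) * (\<Sum>i\<in>UNIV. lam i * (p i \<bullet> p i)) + (\<Sum>i\<in>UNIV. lam i * c i)"
proof -
  define m where "m = (\<Sum>i\<in>UNIV. lam i *\<^sub>R p i)"
  have e1: "(\<Sum>i\<in>UNIV. lam i * (p i \<bullet> m)) = m \<bullet> m"
    by (simp add: m_def inner_sum_left)
  have "(\<Sum>i\<in>UNIV. lam i * ((1/2) * (norm (p i - m))\<^sup>2 + c i))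
      = (1/2) * (\<Sum>i\<in>UNIV. lam i * (p i \<bullet> p i)) - (\<Sum>i\<in>UNIV. lam i * (p i \<bullet> m))
        + (1/2) * (\<Sum>i\<in>UNIV. lam i) * (m \<bullet> m) + (\<Sum>i\<in>UNIV. lam i * c i)"
    by (simp add: power2_norm_eq_inner inner_diff_left inner_diff_right inner_commute
        algebra_simps sum.distrib sum_subtractf sum_distrib_left sum_distrib_right sum_divide_distrib)
  then show ?thesis
    unfolding m_def[symmetric] using assms e1
    by (simp add: power2_norm_eq_inner inner_diff_left inner_diff_right inner_commute algebra_simps)
qed

lemma qagg_bound:
  fixes p :: "'i::finite \<Rightarrow> 'v::real_inner" and c :: "'i \<Rightarrow> real" and f \<xi> :: 'v
  defines "crit \<equiv> (\<lambda>lam. (norm (f + \<xi> - (\<Sum>i\<in>UNIV. lam i *\<^sub>R p i)))\<^sup>2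
      + (\<Sum>i\<in>UNIV. lam i * ((1/2) * (norm (p i - (\<Sum>i\<in>UNIV. lam i *\<^sub>R p i)))\<^sup>2 + c i)))"
  assumes nn: "\<forall>i. lam i \<ge> 0" and s1: "(\<Sum>i\<in>UNIV. lam i) = 1"
    and opt: "\<And>lam'. (\<forall>i. lam' i \<ge> 0) \<Longrightarrow> (\<Sum>i\<in>UNIV. lam' i) = 1 \<Longrightarrow> crit lam \<le> crit lam'"
  shows "(norm (f - (\<Sum>i\<in>UNIV. lam i *\<^sub>R p i)))\<^sup>2 \<le> (norm (f - p j))\<^sup>2 + c j
     + (\<Sum>i\<in>UNIV. lam i * (2 * (\<xi> \<bullet> (p i - p j)) - (1/2) * (norm (p i - p j))\<^sup>2 - c i))"
proof -
  define y where "y = f + \<xi>"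
  define m where "m = (\<Sum>i\<in>UNIV. lam i *\<^sub>R p i)"
  define Q where "Q = (\<Sum>i\<in>UNIV. lam i * (p i \<bullet> p i))"
  define C where "C = (\<Sum>i\<in>UNIV. lam i * c i)"
  define D where "D = (p j - m) \<bullet> (p j - m)"
  define Bk where "Bk = - 2 * (y \<bullet> (p j - m)) + m \<bullet> p j - m \<bullet> m + (1/2) * (p j \<bullet> p j) - (1/2) * Q + c j - C"
  have D0: "D \<ge> 0" unfolding D_def by simp
  have critl: "crit lam = y \<bullet> y - 2 * (y \<bullet> m) + (1/2) * (m \<bullet> m) + (1/2) * Q + C"
    unfolding crit_def y_def[symmetric] m_def Q_def C_def by (rule crit_formula[OF s1])
  have step: "0 \<le> Bk + t / 2 * D" if t: "0 < t" "t \<le> 1" for t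
  proof -
    define lt where "lt = (\<lambda>i. (1 - t) * lam i + t * (if i = j then 1 else 0))"
    have lt_nn: "\<forall>i. lt i \<ge> 0" using nn t by (auto simp: lt_def)
    have lt_s: "(\<Sum>i\<in>UNIV. lt i) = 1"
      using s1 by (simp add: lt_def sum.distrib sum_distrib_left[symmetric])
    have mt: "(\<Sum>i\<in>UNIV. lt i *\<^sub>R p i) = (1 - t) *\<^sub>R m + t *\<^sub>R p j"
    proof -
      have a: "(t * (if i = j then 1 else 0)) *\<^sub>R p i = (if i = j then t *\<^sub>R p j else 0)" for i by auto
      have b: "((1 - t) * lam i) *\<^sub>R p i = (1 - t) *\<^sub>R (lam i *\<^sub>R p i)" for i by simp
      show ?thesis unfolding lt_def scaleR_add_left sum.distrib a b m_def
        by (simp add: scaleR_sum_right)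
    qed
    have Qt: "(\<Sum>i\<in>UNIV. lt i * (p i \<bullet> p i)) = (1 - t) * Q + t * (p j \<bullet> p j)"
    proof -
      have a: "(t * (if i = j then 1 else 0)) * (p i \<bullet> p i) = (if i = j then t * (p j \<bullet> p j) else 0)" for i by auto
      show ?thesis unfolding lt_def distrib_right sum.distrib a Q_def
        by (simp add: sum_distrib_left mult.assoc)
    qed
    have Ct: "(\<Sum>i\<in>UNIV. lt i * c i) = (1 - t) * C + t * c j"
    proof -
      have a: "(t * (if i = j then 1 else 0)) * c i = (if i = j then t * c j else 0)" for i by auto
      show ?thesis unfolding lt_def distrib_right sum.distrib a C_def
        by (simp add: sum_distrib_left mult.assoc)
    qed
    have critt: "crit lt = y \<bullet> y - 2 * (y \<bullet> ((1 - t) *\<^sub>R m + t *\<^sub>R p j))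
        + (1/2) * (((1 - t) *\<^sub>R m + t *\<^sub>R p j) \<bullet> ((1 - t) *\<^sub>R m + t *\<^sub>R p j))
        + (1/2) * ((1 - t) * Q + t * (p j \<bullet> p j)) + ((1 - t) * C + t * c j)"
      unfolding crit_def y_def[symmetric] using crit_formula[OF lt_s, of y p c] by (simp only: mt Qt Ct)
    have "crit lt - crit lam = t * (Bk + t / 2 * D)"
      unfolding critt critl Bk_def D_def
      by (simp add: inner_add_left inner_add_right inner_diff_left inner_diff_right inner_commute algebra_simps power2_eq_square)
    moreover have "crit lam \<le> crit lt" using opt[OF lt_nn lt_s] .
    ultimately have "0 \<le> t * (Bk + t / 2 * D)" by simp
    then show ?thesis using t by (simp add: zero_le_mult_iff)
  qed
  have Bk0: "0 \<le> Bk"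
  proof (rule ccontr)
    assume neg: "\<not> 0 \<le> Bk"
    show False
    proof (cases "D = 0")
      case True then show ?thesis using step[of 1] neg by simp
    next
      case False
      then have Dp: "D > 0" using D0 by simp
      define t where "t = min 1 (- Bk / D)"
      have t: "0 < t" "t \<le> 1" using neg Dp by (auto simp: t_def divide_neg_pos)
      have "t / 2 * D \<le> - Bk / 2" using Dp
        by (simp add: t_def min_def field_simps split: if_splits)
      then show False using step[OF t] neg by simp
    qed
  qed
  have "(norm (f - p j))\<^sup>2 + c j
     + (\<Sum>i\<in>UNIV. lam i * (2 * (\<xi> \<bullet> (p i - p j)) - (1/2) * (norm (p i - p j))\<^sup>2 - c i))
     - (norm (f - m))\<^sup>2 = Bk"
  proof -
    have "(\<Sum>i\<in>UNIV. lam i * (2 * (\<xi> \<bullet> (p i - p j)) - (1/2) * (norm (p i - p j))\<^sup>2 - c i))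
       = 2 * (\<xi> \<bullet> m) - 2 * (\<Sum>i\<in>UNIV. lam i) * (\<xi> \<bullet> p j) - (1/2) * Q + m \<bullet> p j
         - (1/2) * (\<Sum>i\<in>UNIV. lam i) * (p j \<bullet> p j) - C"
      by (simp add: m_def Q_def C_def power2_norm_eq_inner inner_diff_left inner_diff_right inner_commute
          algebra_simps sum.distrib sum_subtractf sum_distrib_left sum_distrib_right inner_sum_left inner_sum_right)
    then show ?thesis using s1 unfolding Bk_def y_def
      by (simp add: power2_norm_eq_inner inner_diff_left inner_diff_right inner_add_left inner_add_right inner_commute algebra_simps)
  qed
  then show ?thesis using Bk0 unfolding m_def by linarith
qed



definition Zc :: "'p::finite itself \<Rightarrow> real" where
  "Zc _ = (\<Sum>J'\<in>(UNIV :: 'p set set). prior_w J')"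

lemma prior_w_pos: "prior_w (J :: 'p::finite set) > 0"
proof -
  have "card J \<le> CARD('p)" by (rule card_mono) auto
  then show ?thesis unfolding prior_w_def by (simp add: zero_less_binomial)
qed

lemma Zc_eq: "Zc TYPE('p::finite) = (\<Sum>k<Suc CARD('p). exp (-1) ^ k)"
proof -
  have "Zc TYPE('p) = (\<Sum>k\<in>{..<Suc CARD('p)}. \<Sum>J\<in>{J. J \<in> (UNIV :: 'p set set) \<and> card J = k}. prior_w J)"
    unfolding Zc_def
    by (rule sum.group[symmetric]) (auto simp: less_Suc_eq_le card_mono)
  also have "\<dots> = (\<Sum>k<Suc CARD('p). exp (-1) ^ k)"
  proof (intro sum.cong refl)
    fix k assume "k \<in> {..<Suc CARD('p)}"
    then have k: "k \<le> CARD('p)" by simp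
    have "(\<Sum>J\<in>{J. J \<in> (UNIV :: 'p set set) \<and> card J = k}. prior_w J)
        = (\<Sum>J\<in>{J. J \<in> (UNIV :: 'p set set) \<and> card J = k}. exp (- real k) / real (CARD('p) choose k))"
      by (intro sum.cong refl) (auto simp: prior_w_def)
    also have "\<dots> = real (card {J. J \<subseteq> (UNIV :: 'p set) \<and> card J = k}) * (exp (- real k) / real (CARD('p) choose k))"
      by simp
    also have "\<dots> = exp (- real k)"
      using n_subsets[of "UNIV :: 'p set" k] k by (simp add: zero_less_binomial)
    also have "\<dots> = exp (-1) ^ k" by (simp add: exp_of_nat_mult[symmetric])
    finally show "(\<Sum>J\<in>{J. J \<in> (UNIV :: 'p set set) \<and> card J = k}. prior_w J) = exp (-1) ^ k" .
  qed
  finally show ?thesis .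
qed

lemma exp1_ge: "exp (1::real) \<ge> 5/2"
proof -
  have "(1 + 1 / real (8::nat)) ^ 8 \<le> exp (1::real)"
    by (rule exp_ge_one_plus_x_over_n_power_n) auto
  moreover have "(5/2::real) \<le> (1 + 1 / real (8::nat)) ^ 8" by (simp add: power_def)
  ultimately show ?thesis by linarith
qed

lemma Zc_bounds: "1 \<le> Zc TYPE('p::finite)" "Zc TYPE('p) \<le> 5/3"
proof -
  have e: "exp (-1::real) \<le> 2/5" using exp1_ge by (simp add: exp_minus field_simps)
  have ep: "0 < exp (-1::real)" "exp (-1::real) < 1" by auto
  have "(\<Sum>k<Suc CARD('p). exp (-1::real) ^ k) = (1 - exp (-1) ^ Suc CARD('p)) / (1 - exp (-1))"
    using ep by (subst sum_gp_strict) simp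
  also have "\<dots> \<le> 1 / (1 - exp (-1))"
    using ep by (intro divide_right_mono) auto
  also have "\<dots> \<le> 5/3" using e ep by (simp add: field_simps)
  finally show "Zc TYPE('p) \<le> 5/3" by (simp add: Zc_eq)
  have "(\<Sum>k\<in>{0}. exp (-1::real) ^ k) \<le> (\<Sum>k<Suc CARD('p). exp (-1::real) ^ k)"
    by (rule sum_mono2) auto
  then show "1 \<le> Zc TYPE('p)" by (simp add: Zc_eq)
qed

lemma lnZ_le: "ln (Zc TYPE('p::finite)) \<le> 3/4"
proof -
  have "Zc TYPE('p) \<le> 1 + 3/4" using Zc_bounds(2)[where 'p='p] by simp
  also have "\<dots> \<le> exp (3/4)" by (rule exp_ge_add_one_self)
  finally have "ln (Zc TYPE('p)) \<le> ln (exp (3/4))"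
    using Zc_bounds(1)[where 'p='p] by (subst ln_le_cancel_iff) auto
  then show ?thesis by simp
qed

lemma prior_pos: "prior (J :: 'p::finite set) > 0"
  unfolding prior_def using prior_w_pos[of J] Zc_bounds(1)[where 'p='p]
  by (simp add: Zc_def)

lemma prior_sum: "(\<Sum>J\<in>(UNIV :: 'p::finite set set). prior J) = 1"
  unfolding prior_def using Zc_bounds(1)[where 'p='p]
  by (simp add: sum_divide_distrib[symmetric] Zc_def)

lemma L_eq: "ln (1 / prior (J :: 'p::finite set)) = ln (Zc TYPE('p)) + card J + ln (real (CARD('p) choose card J))"
proof -
  have ch: "real (CARD('p) choose card J) > 0"
  proof -
    have "card J \<le> CARD('p)" by (rule card_mono) auto
    then show ?thesis by (simp add: zero_less_binomial)
  qed
  have Z: "Zc TYPE('p) > 0" using Zc_bounds(1)[where 'p='p] by simp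
  have pd: "prior J = prior_w J / Zc TYPE('p)" by (simp add: prior_def Zc_def)
  have "1 / prior J = Zc TYPE('p) * exp (real (card J)) * real (CARD('p) choose card J)"
    unfolding pd unfolding prior_w_def using ch Z by (simp add: exp_minus field_simps)
  then show ?thesis using ch Z by (simp add: ln_mult)
qed

lemma L_ge: "ln (1 / prior (J :: 'p::finite set)) \<ge> card J"
proof -
  have "card J \<le> CARD('p)" by (rule card_mono) auto
  then have "real (CARD('p) choose card J) \<ge> 1" by (simp add: Suc_le_eq zero_less_binomial)
  then show ?thesis using L_eq[of J] Zc_bounds(1)[where 'p='p] by simp
qed

lemma fact_ge: "real k ^ k / fact k \<le> exp (real k)"
proof -
  have "(\<Sum>n\<in>{k}. real k ^ n /\<^sub>R fact n) \<le> (\<Sum>n. real k ^ n /\<^sub>R fact n)"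
    by (rule sum_le_suminf) (use exp_converges[of "real k"] in \<open>auto simp: sums_iff\<close>)
  also have "\<dots> = exp (real k)" using exp_converges[of "real k"] by (simp add: sums_iff)
  finally show ?thesis by (simp add: divide_inverse mult.commute)
qed

lemma ln_choose_le:
  assumes "1 \<le> k" "k \<le> p"
  shows "ln (real (p choose k)) \<le> real k * ln (exp 1 * real p / real k)"
proof -
  have c: "real (p choose k) * fact k \<le> real p ^ k"
    using binomial_fact_pow[of p k] by (metis of_nat_fact of_nat_le_iff of_nat_mult of_nat_power)
  have kp: "real k > 0" using assms by simp
  have fk: "fact k \<ge> real k ^ k / exp (real k)" using fact_ge[of k] by (simp add: field_simps)
  have "real (p choose k) \<le> real p ^ k / fact k" using c by (simp add: field_simps)
  also have "\<dots> \<le> real p ^ k / (real k ^ k / exp (real k))"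
    using fk kp by (intro divide_left_mono) auto
  also have "\<dots> = (exp 1 * real p / real k) ^ k"
    using kp by (simp add: power_divide power_mult_distrib exp_of_nat_mult[symmetric] field_simps)
  finally have le: "real (p choose k) \<le> (exp 1 * real p / real k) ^ k" .
  have pos: "real (p choose k) > 0" using assms by (simp add: zero_less_binomial)
  have "ln (real (p choose k)) \<le> ln ((exp 1 * real p / real k) ^ k)"
    using le pos kp by (subst ln_le_cancel_iff) auto
  also have "\<dots> = real k * ln (exp 1 * real p / real k)"
    using assms by (simp add: ln_realpow)
  finally show ?thesis .
qed

lemma L_le:
  fixes J :: "'p::finite set"
  shows "ln (1 / prior J) \<le> 3/4 + 2 * real (card J) * ln (exp 1 * real CARD('p) / max 1 (real (card J)))"
proof (cases "card J = 0")
  case True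
  then show ?thesis using L_eq[of J] lnZ_le[where 'p='p] by simp
next
  case False
  have kp: "card J \<le> CARD('p)" by (rule card_mono) auto
  have k1: "1 \<le> card J" using False by linarith
  have mx: "max 1 (real (card J)) = real (card J)" using k1 by simp
  have l1: "1 \<le> ln (exp 1 * real CARD('p) / real (card J))"
  proof -
    have "exp 1 \<le> exp 1 * real CARD('p) / real (card J)"
      using kp k1 by (simp add: field_simps)
    then show ?thesis using k1 kp by (subst ln_ge_iff) auto
  qed
  have "ln (1 / prior J) \<le> 3/4 + card J + real (card J) * ln (exp 1 * real CARD('p) / real (card J))"
    using L_eq[of J] lnZ_le[where 'p='p] ln_choose_le[OF k1 kp] by simp
  also have "\<dots> \<le> 3/4 + 2 * real (card J) * ln (exp 1 * real CARD('p) / real (card J))"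
    using l1 k1 by (simp add: algebra_simps)
  finally show ?thesis unfolding mx .
qed



definition Vc :: "real^'p^'n \<Rightarrow> 'p set \<Rightarrow> (real^'n) set" where
  "Vc X S = span ((\<lambda>j. column j X) ` S)"

definition bas :: "real^'p^'n \<Rightarrow> 'p set \<Rightarrow> (real^'n) set" where
  "bas X S = (SOME B. B \<subseteq> Vc X S \<and> pairwise orthogonal B \<and> (\<forall>x\<in>B. norm x = 1)
      \<and> independent B \<and> card B = dim (Vc X S) \<and> span B = Vc X S)"

lemma bas_props:
  fixes X :: "real^'p::finite^'n::finite"
  shows "is_onb (bas X S)" "span (bas X S) = Vc X S" "card (bas X S) \<le> card S"
proof -
  have sub: "subspace (Vc X S)" unfolding Vc_def by simp
  obtain B where B: "B \<subseteq> Vc X S" "pairwise orthogonal B" "\<And>x. x \<in> B \<Longrightarrow> norm x = 1"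
     "independent B" "card B = dim (Vc X S)" "span B = Vc X S"
    using orthonormal_basis_subspace[OF sub] by metis
  define P where "P = (\<lambda>B. B \<subseteq> Vc X S \<and> pairwise orthogonal B \<and> (\<forall>x\<in>B. norm x = 1)
      \<and> independent B \<and> card B = dim (Vc X S) \<and> span B = Vc X S)"
  have "P B" unfolding P_def using B by blast
  then have "P (bas X S)" unfolding bas_def P_def[symmetric] by (rule someI)
  then have P: "bas X S \<subseteq> Vc X S \<and> pairwise orthogonal (bas X S) \<and> (\<forall>x\<in>bas X S. norm x = 1)
      \<and> independent (bas X S) \<and> card (bas X S) = dim (Vc X S) \<and> span (bas X S) = Vc X S"
    unfolding P_def .
  then show "is_onb (bas X S)" unfolding is_onb_def using independent_imp_finite by blast
  show "span (bas X S) = Vc X S" using P by blast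
  have "card (bas X S) = dim (Vc X S)" using P by blast
  also have "\<dots> = dim ((\<lambda>j. column j X) ` S)" unfolding Vc_def by simp
  also have "\<dots> \<le> card ((\<lambda>j. column j X) ` S)" by (rule dim_le_card) (auto intro: span_base)
  also have "\<dots> \<le> card S" by (rule card_image_le) simp
  finally show "card (bas X S) \<le> card S" .
qed

lemma proj_eq:
  fixes X :: "real^'p::finite^'n::finite"
  shows "proj_cols X S y = onbp (bas X S) y"
  unfolding proj_cols_def Vc_def[symmetric] bas_props(2)[symmetric]
  by (rule onbp_closest[OF bas_props(1)])

lemma proj_in: 
  fixes X :: "real^'p::finite^'n::finite"
  assumes "S \<subseteq> T"
  shows "proj_cols X S y \<in> Vc X T"
proof -
  have "proj_cols X S y \<in> Vc X S" unfolding proj_eq bas_props(2)[symmetric] by (rule onbp_in_span)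
  moreover have "Vc X S \<subseteq> Vc X T" unfolding Vc_def using assms by (intro span_mono) auto
  ultimately show ?thesis by auto
qed

lemma Xtheta_in:
  fixes X :: "real^'p::finite^'n::finite"
  shows "X *v \<theta> \<in> Vc X {j. \<theta> $ j \<noteq> 0}"
proof -
  have "X *v \<theta> = (\<Sum>i\<in>UNIV. (\<theta>$i) *\<^sub>R column i X)"
    by (simp add: matrix_mult_sum scalar_mult_eq_scaleR)
  also have "\<dots> = (\<Sum>i\<in>{j. \<theta> $ j \<noteq> 0}. (\<theta>$i) *\<^sub>R column i X)"
    by (rule sum.mono_neutral_right) auto
  also have "\<dots> \<in> Vc X {j. \<theta> $ j \<noteq> 0}" unfolding Vc_def
    by (intro span_sum span_scale span_base) auto
  finally show ?thesis .
qed



lemma arith_final: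
  fixes a h x k q L :: real
  assumes "0 < a" "a \<le> h" "0 < x" "0 \<le> k" "k \<le> q" "0 \<le> q" "L \<le> 3/4 + 2 * q"
  shows "32 * h * L + 12 * a * (k / 2 + x + L) \<le> 31 * a * x + (64 * h + 4 * a) * (1/2 + 2 * q)"
proof -
  have h0: "0 \<le> h" using assms by linarith
  have f1: "h * L \<le> h * (3/4 + 2 * q)" using assms h0 by (intro mult_left_mono) auto
  have f2: "a * L \<le> a * (3/4 + 2 * q)" using assms by (intro mult_left_mono) auto
  have f3: "a * k \<le> a * q" using assms by (intro mult_left_mono) auto
  have f4: "a * q \<le> h * q" using assms by (intro mult_right_mono) auto
  have f5: "0 \<le> a * x" "0 \<le> a * q" using assms by simp_all
  have e1: "32 * h * L + 12 * a * (k / 2 + x + L) = 32 * (h * L) + 6 * (a * k) + 12 * (a * x) + 12 * (a * L)"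
    by (simp add: algebra_simps)
  have e2: "31 * a * x + (64 * h + 4 * a) * (1/2 + 2 * q) = 31 * (a * x) + 32 * h + 2 * a + 128 * (h * q) + 8 * (a * q)"
    by (simp add: algebra_simps)
  have e3: "h * (3/4 + 2 * q) = 3/4 * h + 2 * (h * q)" "a * (3/4 + 2 * q) = 3/4 * a + 2 * (a * q)"
    by (simp_all add: algebra_simps)
  show ?thesis unfolding e1 e2 using f1 f2 f3 f4 f5 assms(1,2) e3 by linarith
qed

lemma term_arith:
  fixes a h x k k' d L L' ln2 S :: real
  assumes "0 < a" "a \<le> h" "0 \<le> ln2" "ln2 \<le> 1" "d \<le> k + k'" "0 \<le> k'" "k' \<le> L'" "0 \<le> L'"
    "S < 4 * a * (d * ln2 / 2 + (x + L + L'))"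
  shows "2 * S - 32 * h * L' \<le> 8 * a * (k * ln2 / 2 + x + L)"
proof -
  have f1: "a * (d * ln2) \<le> a * ((k + k') * ln2)" using assms by (intro mult_left_mono mult_right_mono) auto
  have f2: "a * (k' * ln2) \<le> a * L'"
  proof -
    have "k' * ln2 \<le> L' * 1" using assms by (intro mult_mono) auto
    then show ?thesis using assms by (intro mult_left_mono) auto
  qed
  have f3: "a * L' \<le> h * L'" using assms by (intro mult_right_mono) auto
  have f4: "0 \<le> a * L'" using assms by simp
  have e1: "a * ((k + k') * ln2) = a * (k * ln2) + a * (k' * ln2)" by (simp add: algebra_simps)
  have e2: "4 * a * (d * ln2 / 2 + (x + L + L')) = 2 * (a * (d * ln2)) + 4 * (a * x) + 4 * (a * L) + 4 * (a * L')"
    by (simp add: algebra_simps)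
  have e3: "8 * a * (k * ln2 / 2 + x + L) = 4 * (a * (k * ln2)) + 8 * (a * x) + 8 * (a * L)"
    by (simp add: algebra_simps)
  have e4: "32 * h * L' = 32 * (h * L')" by simp
  show ?thesis unfolding e3 e4 using f1 f2 f3 f4 assms(9) e1 e2 by linarith
qed



lemma det_bound:
  fixes X :: "real^'p::finite^'n::finite" and f \<xi> :: "real^'n" and \<theta> :: "real^'p"
  assumes K: "K > 0" and Kh: "K\<^sup>2 \<le> Kh\<^sup>2" and x: "x > 0"
    and E1: "\<forall>J J'. (\<Sum>u\<in>bas X (J \<union> J'). (\<xi> \<bullet> u)\<^sup>2)
        < 4 * K\<^sup>2 * (real (card (bas X (J \<union> J'))) * ln 2 / 2 + (x + ln (1 / prior J) + ln (1 / prior J')))"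
    and E2: "\<forall>J. (\<Sum>u\<in>bas X J. (\<xi> \<bullet> u)\<^sup>2) < 4 * K\<^sup>2 * (real (card (bas X J)) * ln 2 / 2 + (x + ln (1 / prior J)))"
    and W: "is_spa_weight X Kh (f + \<xi>) lam"
  shows "(norm (mu_lam X lam (f + \<xi>) - f))\<^sup>2
            \<le> (norm (X *v \<theta> - f))\<^sup>2 + 31 * K\<^sup>2 * x
              + (64 * Kh\<^sup>2 + 4 * K\<^sup>2)
                * (1/2 + 2 * real (l0norm \<theta>)
                       * ln (exp 1 * real CARD('p) / max 1 (real (l0norm \<theta>))))"
proof -
  define y where "y = f + \<xi>"
  define p where "p = (\<lambda>J::'p set. proj_cols X J y)"
  define c where "c = (\<lambda>J::'p set. 32 * Kh\<^sup>2 * ln (1 / prior J))"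
  define J where "J = {j. \<theta> $ j \<noteq> 0}"
  define k where "k = real (card J)"
  define ell where "ell = ln (exp 1 * real CARD('p) / max 1 k)"
  define L where "L = (\<lambda>J::'p set. ln (1 / prior J))"
  have l0: "real (l0norm \<theta>) = k" unfolding l0norm_def k_def J_def by simp
  have ln2: "0 \<le> ln (2::real)" "ln (2::real) \<le> 1" using ln_2_less_1 by auto
  have Lge: "real (card J') \<le> L J'" for J' unfolding L_def by (rule L_ge)
  have L0: "0 \<le> L J'" for J' using Lge[of J'] by (meson of_nat_0_le_iff order_trans)
  from W have nn: "\<forall>i. lam i \<ge> 0" and s1: "(\<Sum>i\<in>UNIV. lam i) = 1"
    and opt0: "\<forall>lam'\<in>simplex_weights. spa_crit X Kh y lam \<le> spa_crit X Kh y lam'"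
    unfolding is_spa_weight_def simplex_weights_def y_def by auto
  have qb: "(norm (f - (\<Sum>i\<in>UNIV. lam i *\<^sub>R p i)))\<^sup>2 \<le> (norm (f - p J))\<^sup>2 + c J
     + (\<Sum>i\<in>UNIV. lam i * (2 * (\<xi> \<bullet> (p i - p J)) - (1/2) * (norm (p i - p J))\<^sup>2 - c i))"
  proof (rule qagg_bound[OF nn s1])
    fix lam' :: "'p set \<Rightarrow> real"
    assume "\<forall>i. lam' i \<ge> 0" "(\<Sum>i\<in>UNIV. lam' i) = 1"
    then have "lam' \<in> simplex_weights" unfolding simplex_weights_def by auto
    then have "spa_crit X Kh y lam \<le> spa_crit X Kh y lam'" using opt0 by blast
    then show "(norm (f + \<xi> - (\<Sum>i\<in>UNIV. lam i *\<^sub>R p i)))\<^sup>2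
      + (\<Sum>i\<in>UNIV. lam i * ((1/2) * (norm (p i - (\<Sum>i\<in>UNIV. lam i *\<^sub>R p i)))\<^sup>2 + c i))
      \<le> (norm (f + \<xi> - (\<Sum>i\<in>UNIV. lam' i *\<^sub>R p i)))\<^sup>2
      + (\<Sum>i\<in>UNIV. lam' i * ((1/2) * (norm (p i - (\<Sum>i\<in>UNIV. lam' i *\<^sub>R p i)))\<^sup>2 + c i))"
      unfolding spa_crit_def mu_lam_def p_def c_def y_def .
  qed
  define R where "R = 8 * K\<^sup>2 * (k * ln 2 / 2 + x + L J)"
  have tm: "2 * (\<xi> \<bullet> (p J' - p J)) - (1/2) * (norm (p J' - p J))\<^sup>2 - c J' \<le> R" for J'
  proof -
    define S where "S = J' \<union> J"
    have w: "p J' - p J \<in> span (bas X S)"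
    proof -
      have a: "p J' \<in> Vc X S" "p J \<in> Vc X S" unfolding p_def S_def by (intro proj_in; auto)+
      show ?thesis unfolding bas_props(2) using a unfolding Vc_def by (rule span_diff)
    qed
    have k1: "2 * (\<xi> \<bullet> (p J' - p J)) - (1/2) * ((p J' - p J) \<bullet> (p J' - p J)) \<le> 2 * (\<Sum>u\<in>bas X S. (\<xi> \<bullet> u)\<^sup>2)"
      by (rule onb_key1[OF bas_props(1) w])
    have e1: "(\<Sum>u\<in>bas X S. (\<xi> \<bullet> u)\<^sup>2)
        < 4 * K\<^sup>2 * (real (card (bas X S)) * ln 2 / 2 + (x + L J + L J'))"
      using E1[rule_format, of J J'] unfolding S_def L_def by (simp add: Un_commute)
    have d: "real (card (bas X S)) \<le> k + real (card J')"
    proof -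
      have "card (bas X S) \<le> card S" by (rule bas_props(3))
      also have "\<dots> \<le> card J' + card J" unfolding S_def by (rule card_Un_le)
      finally show ?thesis unfolding k_def by simp
    qed
    have "2 * (\<Sum>u\<in>bas X S. (\<xi> \<bullet> u)\<^sup>2) - 32 * Kh\<^sup>2 * L J' \<le> 8 * K\<^sup>2 * (k * ln 2 / 2 + x + L J)"
      by (rule term_arith[OF _ Kh ln2 d _ Lge L0 e1]) (use K in auto)
    then show ?thesis using k1 unfolding R_def c_def L_def by (simp add: power2_norm_eq_inner)
  qed
  have sumb: "(\<Sum>i\<in>UNIV. lam i * (2 * (\<xi> \<bullet> (p i - p J)) - (1/2) * (norm (p i - p J))\<^sup>2 - c i)) \<le> R"
  proof -
    have "(\<Sum>i\<in>UNIV. lam i * (2 * (\<xi> \<bullet> (p i - p J)) - (1/2) * (norm (p i - p J))\<^sup>2 - c i)) \<le> (\<Sum>i\<in>UNIV. lam i * R)"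
      using nn tm by (intro sum_mono mult_left_mono) auto
    also have "\<dots> = R" using s1 by (simp add: sum_distrib_right[symmetric])
    finally show ?thesis .
  qed
  have pJ: "(norm (f - p J))\<^sup>2 \<le> (norm (f - X *v \<theta>))\<^sup>2 + (\<Sum>u\<in>bas X J. (\<xi> \<bullet> u)\<^sup>2)"
  proof -
    have z: "X *v \<theta> \<in> span (bas X J)" unfolding bas_props(2) J_def by (rule Xtheta_in)
    show ?thesis unfolding p_def proj_eq y_def by (rule onb_key2[OF bas_props(1) z])
  qed
  have e2: "(\<Sum>u\<in>bas X J. (\<xi> \<bullet> u)\<^sup>2) \<le> 4 * K\<^sup>2 * (k * ln 2 / 2 + (x + L J))"
  proof -
    have "real (card (bas X J)) \<le> k" unfolding k_def using bas_props(3) by simp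
    then have "real (card (bas X J)) * ln 2 / 2 \<le> k * ln 2 / 2" using ln2 by (simp add: mult_right_mono divide_right_mono)
    then have "4 * K\<^sup>2 * (real (card (bas X J)) * ln 2 / 2 + (x + L J)) \<le> 4 * K\<^sup>2 * (k * ln 2 / 2 + (x + L J))"
      by (intro mult_left_mono) auto
    then show ?thesis using E2[rule_format, of J] unfolding L_def by linarith
  qed
  have tot: "(norm (f - (\<Sum>i\<in>UNIV. lam i *\<^sub>R p i)))\<^sup>2 \<le> (norm (f - X *v \<theta>))\<^sup>2
      + 32 * Kh\<^sup>2 * L J + 12 * K\<^sup>2 * (k / 2 + x + L J)"
  proof -
    have "k * ln 2 \<le> k * 1" using ln2 k_def by (intro mult_left_mono) auto
    then have "K\<^sup>2 * (k * ln 2) \<le> K\<^sup>2 * k" by (intro mult_left_mono) auto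
    then show ?thesis using qb sumb pJ e2 unfolding R_def c_def L_def by (simp add: algebra_simps)
  qed
  have Lb: "L J \<le> 3/4 + 2 * (k * ell)"
    using L_le[of J] unfolding L_def k_def ell_def by (simp add: mult.assoc)
  have ell1: "1 \<le> ell"
  proof -
    have "max 1 k \<le> real CARD('p)" unfolding k_def using card_mono[of UNIV J] by auto
    then have "exp 1 \<le> exp 1 * real CARD('p) / max 1 k" by (simp add: field_simps)
    then show ?thesis unfolding ell_def by (subst ln_ge_iff) auto
  qed
  have k0: "0 \<le> k" unfolding k_def by simp
  have kq: "k \<le> k * ell" using ell1 k0 by (simp add: mult_le_cancel_left1)
  have "32 * Kh\<^sup>2 * L J + 12 * K\<^sup>2 * (k / 2 + x + L J) \<le> 31 * K\<^sup>2 * x + (64 * Kh\<^sup>2 + 4 * K\<^sup>2) * (1/2 + 2 * (k * ell))"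
    by (rule arith_final) (use K Kh x k0 kq ell1 Lb in auto)
  moreover have "norm (mu_lam X lam (f + \<xi>) - f) = norm (f - (\<Sum>i\<in>UNIV. lam i *\<^sub>R p i))"
    unfolding mu_lam_def p_def y_def by (simp add: norm_minus_commute)
  moreover have "norm (X *v \<theta> - f) = norm (f - X *v \<theta>)" by (simp add: norm_minus_commute)
  ultimately show ?thesis using tot unfolding l0 ell_def[symmetric] by (simp add: mult.assoc)
qed



theorem theorem7p3:
  fixes M :: "'a measure"
    and X :: "real^'p::finite^'n::finite"
    and f :: "real^'n"
    and \<xi> :: "'a \<Rightarrow> real^'n"
    and K :: real
    and Khat :: "'a \<Rightarrow> real"
    and x :: real
  assumes "prob_space M"
    and "\<xi> \<in> borel_measurable M"
    and "Khat \<in> borel_measurable M"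
    and "K > 0"
    and "subgauss_cond M \<xi> K"
    and "\<forall>k>0. subgauss_cond M \<xi> k \<longrightarrow> K \<le> k"
    and "x > 0"
  shows "\<exists>E \<in> sets M.
      measure M E \<ge> 1 - measure M {\<omega> \<in> space M. (Khat \<omega>)\<^sup>2 < K\<^sup>2} - 3 * exp (- x) \<and>
      (\<forall>\<omega> \<in> E. \<forall>lam. is_spa_weight X (Khat \<omega>) (f + \<xi> \<omega>) lam \<longrightarrow>
         (\<forall>\<theta> :: real^'p.
            (norm (mu_lam X lam (f + \<xi> \<omega>) - f))\<^sup>2
            \<le> (norm (X *v \<theta> - f))\<^sup>2 + 31 * K\<^sup>2 * x
              + (64 * (Khat \<omega>)\<^sup>2 + 4 * K\<^sup>2)
                * (1/2 + 2 * real (l0norm \<theta>)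
                       * ln (exp 1 * real CARD('p) / max 1 (real (l0norm \<theta>))))))"
proof -
  note M = assms(1) and meas[measurable] = assms(2) and khm[measurable] = assms(3)
    and K = assms(4) and sg = assms(5) and x = assms(7)
  interpret Mp: prob_space M by (rule M)
  define Lf where "Lf = (\<lambda>J::'p set. ln (1 / prior J))"
  define Sq where "Sq = (\<lambda>\<omega> S. (\<Sum>u\<in>bas X S. (\<xi> \<omega> \<bullet> u)\<^sup>2))"
  have Sqm[measurable]: "(\<lambda>\<omega>. Sq \<omega> S) \<in> borel_measurable M" for S
    unfolding Sq_def by measurable
  define B0 where "B0 = {\<omega> \<in> space M. (Khat \<omega>)\<^sup>2 < K\<^sup>2}"
  define B1 where "B1 = (\<lambda>J J'. {\<omega> \<in> space M. 4 * K\<^sup>2 * (real (card (bas X (J \<union> J'))) * ln 2 / 2 + (x + Lf J + Lf J')) \<le> Sq \<omega> (J \<union> J')})"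
  define B2 where "B2 = (\<lambda>J. {\<omega> \<in> space M. 4 * K\<^sup>2 * (real (card (bas X J)) * ln 2 / 2 + (x + Lf J)) \<le> Sq \<omega> J})"
  define U1 where "U1 = (\<Union>J\<in>UNIV. \<Union>J'\<in>UNIV. B1 J J')"
  define U2 where "U2 = (\<Union>J\<in>UNIV. B2 J)"
  define E where "E = space M - (B0 \<union> U1 \<union> U2)"
  have B0s[measurable]: "B0 \<in> sets M" unfolding B0_def by measurable
  have B1s[measurable]: "B1 J J' \<in> sets M" for J J' unfolding B1_def by measurable
  have B2s[measurable]: "B2 J \<in> sets M" for J unfolding B2_def by measurable
  have U1s[measurable]: "U1 \<in> sets M" unfolding U1_def by (intro sets.finite_UN) auto
  have U2s[measurable]: "U2 \<in> sets M" unfolding U2_def by (intro sets.finite_UN) auto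
  have Es: "E \<in> sets M" unfolding E_def by measurable
  have expL: "exp (- Lf J) = prior J" for J
    using prior_pos[of J] unfolding Lf_def by (simp add: ln_div)
  have onb: "is_onb (bas X S)" for S by (rule bas_props(1))
  have tail: "measure M {\<omega>\<in>space M. 4 * K\<^sup>2 * (real (card (bas X S)) * ln 2 / 2 + t) \<le> Sq \<omega> S} \<le> exp (- t)" for S t
    unfolding Sq_def using quad_tail[OF M meas sg K, of "bas X S" t] onb[of S] unfolding is_onb_def by auto
  have m1: "measure M (B1 J J') \<le> exp (- x) * (prior J * prior J')" for J J'
  proof -
    have "measure M (B1 J J') \<le> exp (- (x + Lf J + Lf J'))" unfolding B1_def by (rule tail)
    also have "\<dots> = exp (- x) * (prior J * prior J')"
      by (simp add: exp_add[symmetric] expL[symmetric] algebra_simps)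
    finally show ?thesis .
  qed
  have m2: "measure M (B2 J) \<le> exp (- x) * prior J" for J
  proof -
    have "measure M (B2 J) \<le> exp (- (x + Lf J))" unfolding B2_def by (rule tail)
    also have "\<dots> = exp (- x) * prior J"
      by (simp add: exp_add[symmetric] expL[symmetric] algebra_simps)
    finally show ?thesis .
  qed
  have mU1: "measure M U1 \<le> exp (- x)"
  proof -
    have "measure M U1 \<le> (\<Sum>J\<in>UNIV. measure M (\<Union>J'\<in>UNIV. B1 J J'))"
      unfolding U1_def by (rule Mp.finite_measure_subadditive_finite) auto
    also have "\<dots> \<le> (\<Sum>J\<in>UNIV. \<Sum>J'\<in>UNIV. measure M (B1 J J'))"
      by (intro sum_mono Mp.finite_measure_subadditive_finite) auto
    also have "\<dots> \<le> (\<Sum>J\<in>UNIV. \<Sum>J'\<in>UNIV. exp (- x) * (prior (J::'p set) * prior (J'::'p set)))"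
      using m1 by (intro sum_mono) auto
    also have "\<dots> = (\<Sum>J\<in>UNIV. exp (- x) * prior (J::'p set) * (\<Sum>J'\<in>UNIV. prior (J'::'p set)))"
      by (simp add: sum_distrib_left mult.assoc)
    also have "\<dots> = exp (- x)" by (simp add: prior_sum sum_distrib_left[symmetric])
    finally show ?thesis .
  qed
  have mU2: "measure M U2 \<le> exp (- x)"
  proof -
    have "measure M U2 \<le> (\<Sum>J\<in>UNIV. measure M (B2 J))"
      unfolding U2_def by (rule Mp.finite_measure_subadditive_finite) auto
    also have "\<dots> \<le> (\<Sum>J\<in>UNIV. exp (- x) * prior (J::'p set))"
      using m2 by (intro sum_mono) auto
    also have "\<dots> = exp (- x)" by (simp add: prior_sum sum_distrib_left[symmetric])
    finally show ?thesis .
  qed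
  have "measure M (B0 \<union> U1 \<union> U2) \<le> measure M B0 + measure M U1 + measure M U2"
    by (meson Mp.finite_measure_mono add_right_mono measure_Un_le order_trans B0s U1s U2s sets.Un)
  moreover have "measure M E = 1 - measure M (B0 \<union> U1 \<union> U2)"
    unfolding E_def by (rule Mp.prob_compl) auto
  ultimately have mE: "measure M E \<ge> 1 - measure M B0 - 3 * exp (- x)"
    using mU1 mU2 by (smt (verit) exp_ge_zero)
  have good: "(norm (mu_lam X lam (f + \<xi> \<omega>) - f))\<^sup>2
            \<le> (norm (X *v \<theta> - f))\<^sup>2 + 31 * K\<^sup>2 * x
              + (64 * (Khat \<omega>)\<^sup>2 + 4 * K\<^sup>2)
                * (1/2 + 2 * real (l0norm \<theta>)
                       * ln (exp 1 * real CARD('p) / max 1 (real (l0norm \<theta>))))"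
    if \<omega>: "\<omega> \<in> E" and W: "is_spa_weight X (Khat \<omega>) (f + \<xi> \<omega>) lam" for \<omega> lam and \<theta> :: "real^'p"
  proof (rule det_bound[OF K _ x _ _ W])
    have sp: "\<omega> \<in> space M" "\<omega> \<notin> B0" "\<omega> \<notin> U1" "\<omega> \<notin> U2" using \<omega> unfolding E_def by auto
    show "K\<^sup>2 \<le> (Khat \<omega>)\<^sup>2" using sp unfolding B0_def by auto
    show "\<forall>J J'. (\<Sum>u\<in>bas X (J \<union> J'). (\<xi> \<omega> \<bullet> u)\<^sup>2)
        < 4 * K\<^sup>2 * (real (card (bas X (J \<union> J'))) * ln 2 / 2 + (x + ln (1 / prior J) + ln (1 / prior J')))"
      using sp unfolding U1_def B1_def Sq_def Lf_def by (auto simp: not_le)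
    show "\<forall>J. (\<Sum>u\<in>bas X J. (\<xi> \<omega> \<bullet> u)\<^sup>2) < 4 * K\<^sup>2 * (real (card (bas X J)) * ln 2 / 2 + (x + ln (1 / prior J)))"
      using sp unfolding U2_def B2_def Sq_def Lf_def by (auto simp: not_le)
  qed
  show ?thesis
    using Es mE good unfolding B0_def by blast
qed

end
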